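(* The following five definitions produce the same integer sequence, i.e. $a_n=b_n=c_n=d_n=e_n$ for all $n\ge 1$ (in particular each of these sequences is well defined): <ul> <li>$(a_n)_{n\ge1}$ is defined by $a_1=1$ and, for $n\ge 2$: $a_n=a_{n-1}+2$ if $n$ is in the sequence; $a_n=a_{n-1}+2$ if neither $n$ nor $n-1$ is in the sequence; $a_n=a_{n-1}+3$ if $n$ is not in the sequence but $n-1$ is in the sequence.</li> <li>$(b_n)_{n\ge1}$ is defined by $b_1=1$ and, for $n\ge 2$: $b_n=b_{n-1}+2$ if $n-1$ is not in the sequence; $b_n=b_{n-1}+3$ if $n-1$ is in the sequence.</li> <li>$c_n$ is the position of the $n$-th letter $0$ in the fixed point of the morphism $\phi$ on $\{0,1\}^*$ given by $\phi(0)=011$, $\phi(1)=01$.</li> <li>$d_n=\left\lfloor (1+\sqrt{2})\, n-\tfrac12\sqrt{2}\right\rfloor$ for $n\ge1$.</li> <li>$e_n=\lfloor r_n+\tfrac12\rfloor$, where $r_1=\tfrac{4}{\pi}$ and $r_{n+1}=\dfrac{n^2}{r_n-(2n-1)}$ for $n\ge1$.</li> </ul>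
   Context: In the definitions of $(a_n)$ and $(b_n)$, "$m$ is in the sequence" means that $m$ equals some term of that same sequence (the definitions are self-referential but determine the sequence recursively). The fixed point of $\phi$ is the infinite word $\lim_{k\to\infty}\phi^k(0)=0110101011010\cdots$ beginning with $0$; positions in this infinite word are numbered starting from $1$. *)

theory Defs
  imports Complex_Main
begin

text \<open>Sequences are indexed from 1; the value at index 0 is irrelevant.\<close>

definition isA :: "(nat \<Rightarrow> int) \<Rightarrow> bool" where
  "isA a \<longleftrightarrow> a 1 = 1 \<and>
     (\<forall>n\<ge>2.
        (int n \<in> a ` {1..} \<longrightarrow> a n = a (n-1) + 2) \<and>
        (int n \<notin> a ` {1..} \<and> int (n-1) \<notin> a ` {1..} \<longrightarrow> a n = a (n-1) + 2) \<and>
        (int n \<notin> a ` {1..} \<and> int (n-1) \<in> a ` {1..} \<longrightarrow> a n = a (n-1) + 3))"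

definition isB :: "(nat \<Rightarrow> int) \<Rightarrow> bool" where
  "isB b \<longleftrightarrow> b 1 = 1 \<and>
     (\<forall>n\<ge>2.
        (int (n-1) \<notin> b ` {1..} \<longrightarrow> b n = b (n-1) + 2) \<and>
        (int (n-1) \<in> b ` {1..} \<longrightarrow> b n = b (n-1) + 3))"

fun phi_letter :: "nat \<Rightarrow> nat list" where
  "phi_letter l = (if l = 0 then [0,1,1] else [0,1])"

definition phi :: "nat list \<Rightarrow> nat list" where
  "phi w = concat (map phi_letter w)"

text \<open>The fixed point lim phi^k(0) as an infinite word, positions numbered from 1:
  the letter at position i is the eventual value of the (i-1)-th entry of phi^k(0).\<close>
definition fixpt :: "nat \<Rightarrow> nat" where
  "fixpt i = (THE x. \<forall>\<^sub>F k in sequentially.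
       i - 1 < length ((phi ^^ k) [0]) \<and> (phi ^^ k) [0] ! (i - 1) = x)"

definition c_seq :: "nat \<Rightarrow> nat" where
  "c_seq n = (THE p. p \<ge> 1 \<and> fixpt p = 0 \<and> card {q \<in> {1..p}. fixpt q = 0} = n)"

definition d_seq :: "nat \<Rightarrow> int" where
  "d_seq n = \<lfloor>(1 + sqrt 2) * real n - sqrt 2 / 2\<rfloor>"

fun r_seq :: "nat \<Rightarrow> real" where
  "r_seq 0 = 0"
| "r_seq (Suc 0) = 4 / pi"
| "r_seq (Suc (Suc n)) = (real (Suc n))^2 / (r_seq (Suc n) - (2 * real (Suc n) - 1))"

definition e_seq :: "nat \<Rightarrow> int" where
  "e_seq n = \<lfloor>r_seq n + 1/2\<rfloor>"

end

theory Submission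
  imports Defs "HOL-Analysis.Analysis"
begin


definition fI :: "nat \<Rightarrow> real \<Rightarrow> real" where
  "fI n t = (t* (1-t))^n / (1+t^2)^(n+1)"
definition GI :: "nat \<Rightarrow> real \<Rightarrow> real" where
  "GI n t = (t* (1-t))^n * (1 - 2* t - t^2) / (1+t^2)^(n+1)"

lemma poly_id: "real n * (1-2* t) * (1+t^2) * (1 - 2* t - t^2) - (real n+1) * (t* (1-t)) * (2* t) * (1 - 2* t - t^2)
   + (t* (1-t)) * (1+t^2) * (-2-2* t) = real n * (1+t^2)^2 - 2* (2* real n+1)* (t* (1-t))* (1+t^2) - 4* (real n+1)* (t* (1-t))^2"
  by (simp add: algebra_simps power2_eq_square)

lemma absL:
  fixes A B C p W S X Y :: real assumes "X \<noteq> 0" "S \<noteq> 0"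
  shows "((A* Y* p + B* (W* Y)) * (S* S* X) - (W* Y)* p* (C* (S* X))) / ((S* S* X)* (S* S* X))
     = Y/(S* S* S* X) * (A* p* S + B* W* S - W* p* C)"
  using assms by (simp add: field_simps)

lemma absR:
  fixes W S X Y n :: real assumes "X \<noteq> 0" "S \<noteq> 0"
  shows "n * (Y/(S* X)) - 2* (2* n+1) * ((W* Y)/(S* S* X)) - 4* (n+1)* ((W* W* Y)/(S* S* S* X))
     = Y/(S* S* S* X) * (n* S^2 - 2* (2* n+1)* W* S - 4* (n+1)* W^2)"
  using assms by (simp add: field_simps power2_eq_square)

lemma deriv_GI_Suc:
  "(GI (Suc m) has_real_derivative
     (real (Suc m) * fI m t - 2* (2* real (Suc m)+1) * fI (Suc m) t - 4* (real (Suc m)+1) * fI (Suc (Suc m)) t)) (at t)"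
proof -
  have "0 \<le> t^2" by simp
  then have s: "1 + t^2 \<noteq> 0" by linarith
  have X: "(1+t^2)^m \<noteq> 0" using s by simp
  have dW: "((\<lambda>t. t* (1-t)) has_real_derivative (1-2* t)) (at t)"
    by (rule derivative_eq_intros refl)+ simp
  have d1: "((\<lambda>t. (t* (1-t))^(Suc m)) has_real_derivative real (Suc m) * (1-2* t) * (t* (1-t))^m) (at t)"
    using DERIV_power[OF dW, of "Suc m"] by (simp add: mult.assoc)
  have dp: "((\<lambda>t. 1 - 2* t - t^2) has_real_derivative (-2-2* t)) (at t)"
    by (rule derivative_eq_intros refl)+ simp
  have dS: "((\<lambda>t. 1+t^2) has_real_derivative (2* t)) (at t)"
    by (rule derivative_eq_intros refl)+ simp
  have dD: "((\<lambda>t. (1+t^2)^(Suc m+1)) has_real_derivative (real (Suc m)+1) * (2* t) * (1+t^2)^(Suc m)) (at t)"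
    using DERIV_power[OF dS, of "Suc m+1"] by (simp add: mult.assoc)
  have dd: "(GI (Suc m) has_real_derivative
     ((real (Suc m) * (1-2* t) * (t* (1-t))^m * (1 - 2* t - t^2) + (-2-2* t) * (t* (1-t))^(Suc m)) * (1+t^2)^(Suc m+1)
       - (t* (1-t))^(Suc m) * (1 - 2* t - t^2) * ((real (Suc m)+1) * (2* t) * (1+t^2)^(Suc m)))
      / ((1+t^2)^(Suc m+1) * (1+t^2)^(Suc m+1))) (at t)"
    unfolding GI_def[abs_def] using DERIV_divide[OF DERIV_mult[OF d1 dp] dD] s by simp
  have e1: "((real (Suc m) * (1-2* t) * (t* (1-t))^m * (1 - 2* t - t^2) + (-2-2* t) * (t* (1-t))^(Suc m)) * (1+t^2)^(Suc m+1)
       - (t* (1-t))^(Suc m) * (1 - 2* t - t^2) * ((real (Suc m)+1) * (2* t) * (1+t^2)^(Suc m)))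
      / ((1+t^2)^(Suc m+1) * (1+t^2)^(Suc m+1))
    = (t* (1-t))^m/((1+t^2)* (1+t^2)* (1+t^2)* (1+t^2)^m) * 
       ((real (Suc m) * (1-2* t))* (1 - 2* t - t^2)* (1+t^2) + (-2-2* t)* (t* (1-t))* (1+t^2) - (t* (1-t))* (1 - 2* t - t^2)* ((real (Suc m)+1) * (2* t)))"
    using absL[OF X s, of "real (Suc m) * (1-2* t)" "(t* (1-t))^m" "1 - 2* t - t^2" "-2-2* t" "t* (1-t)" "(real (Suc m)+1) * (2* t)"]
    by (simp add: mult_ac)
  have e2: "real (Suc m) * fI m t - 2* (2* real (Suc m)+1) * fI (Suc m) t - 4* (real (Suc m)+1) * fI (Suc (Suc m)) t
     = (t* (1-t))^m/((1+t^2)* (1+t^2)* (1+t^2)* (1+t^2)^m) * (real (Suc m)* (1+t^2)^2 - 2* (2* real (Suc m)+1)* (t* (1-t))* (1+t^2) - 4* (real (Suc m)+1)* (t* (1-t))^2)"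
    using absR[OF X s, of "real (Suc m)" "(t* (1-t))^m" "t* (1-t)"] unfolding fI_def
    by (simp add: mult_ac)
  have e3: "(real (Suc m) * (1-2* t))* (1 - 2* t - t^2)* (1+t^2) + (-2-2* t)* (t* (1-t))* (1+t^2) - (t* (1-t))* (1 - 2* t - t^2)* ((real (Suc m)+1) * (2* t))
     = real (Suc m)* (1+t^2)^2 - 2* (2* real (Suc m)+1)* (t* (1-t))* (1+t^2) - 4* (real (Suc m)+1)* (t* (1-t))^2"
    using poly_id[of "Suc m" t] by (simp add: algebra_simps)
  show ?thesis using dd e1 e2 e3 by simp
qed

lemma deriv_GI_0:
  "(GI 0 has_real_derivative
     (real 0 * fI (0-1) t - 2* (2* real 0+1) * fI 0 t - 4* (real 0+1) * fI (0+1) t)) (at t)"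
proof -
  have "0 \<le> t^2" by simp
  then have s: "1 + t^2 \<noteq> 0" by linarith
  have dp: "((\<lambda>t. 1 - 2* t - t^2) has_real_derivative (-2-2* t)) (at t)"
    by (rule derivative_eq_intros refl)+ simp
  have dS: "((\<lambda>t. 1+t^2) has_real_derivative (2* t)) (at t)"
    by (rule derivative_eq_intros refl)+ simp
  have gi: "GI 0 = (\<lambda>t. (1 - 2* t - t^2) / (1+t^2))" unfolding GI_def by auto
  have d0: "(GI 0 has_real_derivative ((-2-2* t)* (1+t^2) - (1-2* t-t^2)* (2* t))/((1+t^2)* (1+t^2))) (at t)"
    unfolding gi using DERIV_divide[OF dp dS] s by simp
  have f0: "fI 0 t = 1/(1+t^2)" and f1: "fI 1 t = (t* (1-t))/((1+t^2)* (1+t^2))"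
    by (simp_all add: fI_def power2_eq_square)
  have pe: "(-2-2* t)* (1+t^2) - (1-2* t-t^2)* (2* t) = -2* (1+t^2) - 4* (t* (1-t))"
    by (simp add: algebra_simps power2_eq_square)
  have ab: "\<And>S W a :: real. S \<noteq> 0 \<Longrightarrow> a = -2* S - 4* W \<Longrightarrow> a/(S* S) = -2/S - 4* (W/(S* S))"
    by (simp add: field_simps)
  have eq: "((-2-2* t)* (1+t^2) - (1-2* t-t^2)* (2* t))/((1+t^2)* (1+t^2))
      = real 0 * fI (0-1) t - 2* (2* real 0+1) * fI 0 t - 4* (real 0+1) * fI (0+1) t"
    unfolding f0 using ab[OF s pe] f1 by simp
  show ?thesis using d0 eq by simp
qed

lemma deriv_GI:
  "(GI n has_real_derivative
     (real n * fI (n-1) t - 2* (2* real n+1) * fI n t - 4* (real n+1) * fI (n+1) t)) (at t)"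
  using deriv_GI_0[of t] deriv_GI_Suc[of _ t] by (cases n) auto

definition II :: "nat \<Rightarrow> real" where
  "II n = integral {0..1} (fI n)"

lemma cont_fI: "continuous_on A (fI n)"
proof -
  have "\<And>t. (1+t^2)^(n+1) \<noteq> (0::real)"
  proof -
    fix t :: real have "0 \<le> t^2" by simp
    then have "1 + t^2 \<noteq> 0" by linarith
    then show "(1+t^2)^(n+1) \<noteq> (0::real)" by simp
  qed
  then show ?thesis unfolding fI_def by (intro continuous_intros) auto
qed

lemma int_fI: "(fI n has_integral II n) {0..1}"
  unfolding II_def by (rule integrable_integral, rule integrable_continuous_real[OF cont_fI])

lemma II_rel: "real n * II (n-1) - 2* (2* real n+1) * II n - 4* (real n+1) * II (n+1) = GI n 1 - GI n 0"
proof -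
  have "((\<lambda>t. real n * fI (n-1) t - 2* (2* real n+1) * fI n t - 4* (real n+1) * fI (n+1) t) has_integral (GI n 1 - GI n 0)) {0..1}"
  proof (rule fundamental_theorem_of_calculus)
    fix x :: real
    show "(GI n has_vector_derivative (real n * fI (n-1) x - 2* (2* real n+1) * fI n x - 4* (real n+1) * fI (n+1) x)) (at x within {0..1})"
      unfolding has_real_derivative_iff_has_vector_derivative[symmetric]
      by (rule has_field_derivative_at_within[OF deriv_GI])
  qed simp
  moreover have "((\<lambda>t. real n * fI (n-1) t - 2* (2* real n+1) * fI n t - 4* (real n+1) * fI (n+1) t) has_integral
     (real n * II (n-1) - 2* (2* real n+1) * II n - 4* (real n+1) * II (n+1))) {0..1}"
    by (intro has_integral_diff has_integral_mult_right int_fI)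
  ultimately show ?thesis using has_integral_unique by blast
qed

lemma fI_nonneg: "t \<in> {0..1} \<Longrightarrow> 0 \<le> fI n t"
  unfolding fI_def by (auto intro!: divide_nonneg_pos simp: add_pos_nonneg)

lemma II_pos: "II n > 0"
proof -
  have c: "continuous_on {0..1} (fI n)" by (rule cont_fI)
  have iff: "integral {0..1} (fI n) = 0 \<longleftrightarrow> (\<forall>x\<in>{0..1}. fI n x = 0)"
    by (rule integral_eq_0_iff[OF c]) (simp_all add: fI_nonneg)
  have p: "fI n (1/2) > 0" unfolding fI_def by (intro divide_pos_pos zero_less_power) (auto simp: power2_eq_square)
  have ne: "II n \<noteq> 0"
  proof
    assume "II n = 0"
    then have "\<forall>x\<in>{0..1}. fI n x = 0" using iff unfolding II_def by blast
    moreover have "(1/2::real) \<in> {0..1}" by simp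
    ultimately have "fI n (1/2) = 0" by blast
    then show False using p by linarith
  qed
  have "II n \<ge> 0" unfolding II_def
    by (rule integral_nonneg[OF integrable_continuous_real[OF c]]) (simp add: fI_nonneg)
  with ne show ?thesis by simp
qed

lemma II_le: "II (Suc n) \<le> II n / 4"
proof -
  have pt: "\<And>t. t \<in> {0..1} \<Longrightarrow> fI (Suc n) t \<le> fI n t / 4"
  proof -
    fix t :: real assume t: "t \<in> {0..1}"
    have S: "1 \<le> 1 + t^2" by simp
    have "(t-1/2)^2 = 1/4 - t* (1-t)" by (simp add: power2_eq_square algebra_simps)
    moreover have "0 \<le> (t-1/2)^2" by simp
    ultimately have W: "t* (1-t) \<le> 1/4" by linarith
    have W0: "0 \<le> t* (1-t)" using t by auto
    have "fI (Suc n) t = fI n t * (t* (1-t)/(1+t^2))" unfolding fI_def by (simp add: field_simps)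
    also have "\<dots> \<le> fI n t * (1/4)"
    proof (rule mult_left_mono[OF _ fI_nonneg[OF t]])
      have "t* (1-t)/(1+t^2) \<le> t* (1-t)" using divide_left_mono[OF S W0] S by simp
      then show "t* (1-t)/(1+t^2) \<le> 1/4" using W by linarith
    qed
    finally show "fI (Suc n) t \<le> fI n t / 4" by simp
  qed
  have "integral {0..1} (fI (Suc n)) \<le> integral {0..1} (\<lambda>t. fI n t / 4)"
  proof (rule integral_le)
    show "fI (Suc n) integrable_on {0..1}" by (rule integrable_continuous_real[OF cont_fI])
    have "continuous_on {0..1} (\<lambda>t. fI n t / 4)" by (intro continuous_on_divide cont_fI continuous_on_const) auto
    then show "(\<lambda>t. fI n t / 4) integrable_on {0..1}" by (rule integrable_continuous_real)
    show "\<And>x. x \<in> {0..1} \<Longrightarrow> fI (Suc n) x \<le> fI n x / 4" by (rule pt)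
  qed
  also have "\<dots> = II n / 4" unfolding II_def by simp
  finally show ?thesis unfolding II_def .
qed

lemma II0: "II 0 = pi/4"
proof -
  have "((\<lambda>t. inverse (1+t^2)) has_integral (arctan 1 - arctan 0)) {0..1}"
  proof (rule fundamental_theorem_of_calculus)
    fix x :: real
    show "(arctan has_vector_derivative (inverse (1+x^2))) (at x within {0..1})"
      unfolding has_real_derivative_iff_has_vector_derivative[symmetric]
      by (rule has_field_derivative_at_within[OF DERIV_arctan])
  qed simp
  moreover have "fI 0 = (\<lambda>t. inverse (1+t^2))" unfolding fI_def by (auto simp: divide_inverse)
  ultimately have "(fI 0 has_integral (arctan 1 - arctan 0)) {0..1}" by simp
  then have "II 0 = arctan 1 - arctan 0" by (rule has_integral_unique[OF int_fI])
  then show ?thesis by (simp add: arctan_one)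
qed

lemma II1: "II 1 = (4 - pi)/8"
  using II_rel[of 0] II0 unfolding GI_def by simp



lemma s2: "sqrt 2 * sqrt 2 = (2::real)" by simp
lemma s_bounds: "1.41 < sqrt (2::real)" "sqrt (2::real) < 1.42"
proof -
  show "1.41 < sqrt (2::real)" by (rule real_less_rsqrt) (simp add: power2_eq_square)
  have "sqrt (2::real) < sqrt (1.42^2)" by (subst real_sqrt_less_iff) (simp add: power2_eq_square)
  then show "sqrt (2::real) < 1.42" by simp
qed

definition alpha :: real where "alpha = 1 + sqrt 2"
lemma alpha_sq: "alpha * alpha = 2* alpha + 1"
  unfolding alpha_def using s2 by (simp add: algebra_simps)
lemma alpha_bounds: "2.41 < alpha" "alpha < 2.42" unfolding alpha_def using s_bounds by auto

definition Lb :: "real \<Rightarrow> real" where "Lb n = alpha * (n - 1/2)"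
definition Ub :: "real \<Rightarrow> real" where "Ub n = Lb n + 1/(4* alpha* n)"

lemma gL: assumes "n \<ge> 1"
  shows "2* n-1 + n^2/Lb (n+1) = Lb n + 1/(2* alpha* (2* n+1))"
proof -
  have a: "alpha > 0" using alpha_bounds by simp
  have p: "n + 1/2 > 0" using assms by simp
  have eqL: "Lb (n+1) = alpha* (n+1/2)" unfolding Lb_def by (simp add: algebra_simps)
  have eqn: "Lb n = alpha* (n-1/2)" unfolding Lb_def by simp
  have main: "2* n-1 + n^2/(alpha* (n+1/2)) = alpha* (n-1/2) + 1/(2* alpha* (2* n+1))"
  proof -
    define D where "D = alpha* (n+1/2)"
    have D: "D > 0" unfolding D_def using a p by simp
    have e: "n^2 = (alpha* (n-1/2) - (2* n-1))* D + 1/4"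
      unfolding D_def using alpha_sq by (simp add: power2_eq_square) algebra
    have "n^2/D = (alpha* (n-1/2) - (2* n-1)) + 1/(4* D)"
      unfolding e using D by (simp add: field_simps)
    moreover have "4* D = 2* alpha* (2* n+1)" unfolding D_def by (simp add: algebra_simps)
    ultimately show ?thesis unfolding D_def[symmetric] by simp
  qed
  show ?thesis unfolding eqL eqn by (rule main)
qed

lemma Lb_ge: "n \<ge> 1 \<Longrightarrow> Lb (n+1) \<ge> 2* n+1"
proof -
  assume n: "n \<ge> 1"
  have "Lb (n+1) = alpha* (n+1/2)" unfolding Lb_def by (simp add: algebra_simps)
  moreover have "alpha* (n+1/2) \<ge> 2* (n+1/2)" using alpha_bounds n by (intro mult_right_mono) auto
  ultimately show ?thesis by simp
qed

lemma gU: assumes n: "n \<ge> 1" shows "2* n-1 + n^2/Ub (n+1) \<ge> Lb n"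
proof -
  have a: "alpha > 2" "alpha < 3" using alpha_bounds by auto
  define c where "c = 1/(4* alpha* (n+1))"
  define R where "R = (alpha-2)* (n-1/2)"
  have c0: "c > 0" unfolding c_def using a n by simp
  have V: "Ub (n+1) = alpha* (n+1/2) + c" unfolding Ub_def Lb_def c_def by (simp add: algebra_simps)
  have Vp: "alpha* (n+1/2) + c > 0" using a n c0 by (simp add: add_pos_pos)
  have R0: "R \<ge> 0" unfolding R_def using a n by simp
  have RV: "R * (alpha* (n+1/2) + c) = (n^2 - 1/4) + R* c"
    unfolding R_def using alpha_sq by (simp add: power2_eq_square) algebra
  have Rle: "R \<le> n+1" unfolding R_def
  proof -
    have "(alpha-2)* (n-1/2) \<le> 1* (n-1/2)" using a n by (intro mult_right_mono) auto
    then show "(alpha-2)* (n-1/2) \<le> n+1" by simp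
  qed
  have "4* (n+1) \<le> 4* alpha* (n+1)" using a n by (intro mult_right_mono) auto
  then have cle: "c \<le> 1/(4* (n+1))" unfolding c_def using n by (intro frac_le) auto
  have "R* c \<le> (n+1)* (1/(4* (n+1)))" using Rle cle R0 c0 by (intro mult_mono) auto
  moreover have "(n+1)* (1/(4* (n+1))) = 1/4" using n by simp
  ultimately have Rc: "R* c \<le> 1/4" by (simp only:)
  have "R * (alpha* (n+1/2) + c) \<le> n^2" using RV Rc by simp
  then have "R \<le> n^2 / (alpha* (n+1/2) + c)" using Vp by (simp add: le_divide_eq)
  moreover have "Lb n = 2* n-1 + R" unfolding Lb_def R_def by (simp add: field_simps)
  ultimately show ?thesis unfolding V by simp
qed

lemma gL_U: assumes n: "n \<ge> 1" shows "2* n-1 + n^2/Lb (n+1) \<le> Ub n"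
proof -
  have a: "alpha > 2" using alpha_bounds by auto
  have "1/(2* alpha* (2* n+1)) \<le> 1/(4* alpha* n)" using a n by (intro frac_le) (auto simp: algebra_simps)
  then show ?thesis unfolding gL[OF n] Ub_def by simp
qed

lemma diff_recip: fixes n a b :: real
  assumes n: "n \<ge> 1" and ab: "a \<le> b" and a: "a \<ge> 2* n+1"
  shows "n^2/a - n^2/b \<le> (b-a)/4"
proof -
  have a0: "a > 0" "b > 0" using n a ab by auto
  have "n^2/a - n^2/b = n^2* (b-a)/(a* b)" using a0 by (simp add: field_simps)
  also have "\<dots> \<le> n^2* (b-a)/(4* n^2)"
  proof (rule divide_left_mono)
    have "(2* n)* (2* n) \<le> a* b" using a ab n by (intro mult_mono) auto
    then show "4* n^2 \<le> a* b" by (simp add: power2_eq_square)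
    show "0 \<le> n^2* (b-a)" using ab by simp
    show "0 < a* b* (4* n^2)" using a0 n by simp
  qed
  also have "\<dots> = (b-a)/4" using n by (simp add: field_simps power2_eq_square)
  finally show ?thesis .
qed

lemma lin_aux1: "(A::real) - B \<le> (L - x)/4 \<Longrightarrow> 2* n-1+B \<le> U \<Longrightarrow> L - d \<le> x \<Longrightarrow> 2* n-1+A \<le> U + d/4"
  by (simp add: field_simps)
lemma lin_aux2: "(A::real) - B \<le> (x - U)/4 \<Longrightarrow> L \<le> 2* n-1+A \<Longrightarrow> x \<le> U + d \<Longrightarrow> L - d/4 \<le> 2* n-1+B"
  by (simp add: field_simps)

lemma step_bound:
  fixes n x d :: real
  assumes n: "n \<ge> 1" and x: "x \<ge> 2* n+1" and d: "d \<ge> 0"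
    and lo: "Lb (n+1) - d \<le> x" and hi: "x \<le> Ub (n+1) + d"
  shows "Lb n - d/4 \<le> 2* n-1 + n^2/x \<and> 2* n-1 + n^2/x \<le> Ub n + d/4"
proof
  have LL: "Lb (n+1) \<ge> 2* n+1" by (rule Lb_ge[OF n])
  have UL: "Ub (n+1) \<ge> Lb (n+1)" unfolding Ub_def using alpha_bounds n by simp
  show "2* n-1 + n^2/x \<le> Ub n + d/4"
  proof (cases "x \<ge> Lb (n+1)")
    case True
    then have "n^2/x \<le> n^2/Lb (n+1)" using LL n by (intro divide_left_mono) auto
    then show ?thesis using gL_U[OF n] d by simp
  next
    case False
    then have "n^2/x - n^2/Lb (n+1) \<le> (Lb (n+1) - x)/4" using diff_recip[OF n _ x] by simp
    then show ?thesis using gL_U[OF n] lo by (rule lin_aux1)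
  qed
  show "Lb n - d/4 \<le> 2* n-1 + n^2/x"
  proof (cases "x \<le> Ub (n+1)")
    case True
    then have "n^2/Ub (n+1) \<le> n^2/x" using x n by (intro divide_left_mono) auto
    then show ?thesis using gU[OF n] d by simp
  next
    case False
    then have "n^2/Ub (n+1) - n^2/x \<le> (x - Ub (n+1))/4" using diff_recip[OF n _ _] UL LL by simp
    then show ?thesis using gU[OF n] hi by (rule lin_aux2)
  qed
qed

lemma interval_all:
  fixes R :: "nat \<Rightarrow> real"
  assumes rec: "\<And>n. n \<ge> 1 \<Longrightarrow> R n = 2* real n-1 + (real n)^2/R (n+1)"
    and lowb: "\<And>n. n \<ge> 1 \<Longrightarrow> R n \<ge> 2* real n-1"
    and upb: "\<And>n. n \<ge> 1 \<Longrightarrow> R n \<le> 3* real n"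
    and n: "n \<ge> 1"
  shows "Lb (real n) \<le> R n \<and> R n \<le> Ub (real n)"
proof -
  define D where "D m = max 0 (max (Lb (real m) - R m) (R m - Ub (real m)))" for m
  have D0: "D m \<ge> 0" for m unfolding D_def by simp
  have step: "D m \<le> D (m+1) / 4" if m: "m \<ge> 1" for m
  proof -
    have m1: "real m \<ge> 1" using m by simp
    have x: "R (m+1) \<ge> 2* real m+1" using lowb[of "m+1"] by simp
    have lo: "Lb (real m+1) - D (m+1) \<le> R (m+1)" unfolding D_def by (simp add: add.commute)
    have hi: "R (m+1) \<le> Ub (real m+1) + D (m+1)" unfolding D_def by (simp add: add.commute)
    have "Lb (real m) - D (m+1)/4 \<le> R m \<and> R m \<le> Ub (real m) + D (m+1)/4"
      using step_bound[OF m1 x D0 lo hi] rec[OF m] by simp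
    moreover define e where "e = D (m+1)/4"
    moreover have "0 \<le> e" using D0[of "m+1"] unfolding e_def by simp
    ultimately have "Lb (real m) - R m \<le> e" "R m - Ub (real m) \<le> e" "0 \<le> e"
      by linarith+
    then have "D m \<le> e" unfolding D_def[of m] by simp
    then show ?thesis unfolding e_def .
  qed
  have iter: "D m \<le> D (m+k) / 4^k" if "m \<ge> 1" for m k
  proof (induction k)
    case 0 then show ?case by simp
  next
    case (Suc k)
    have "D (m+k) / 4^k \<le> (D (m+k+1) / 4) / 4^k"
      using step[of "m+k"] that by (intro divide_right_mono) auto
    then show ?case using Suc by (simp add: field_simps)
  qed
  have bnd: "D m \<le> 3* real m + 1" if "m \<ge> 1" for m
  proof -
    have a: "alpha < 3" "alpha > 0" using alpha_bounds by auto
    have "alpha* (real m - 1/2) \<le> 3* (real m - 1/2)" using a that by (intro mult_right_mono) auto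
    then have "Lb (real m) \<le> 3* real m" unfolding Lb_def by simp
    moreover have "Ub (real m) \<ge> 0" unfolding Ub_def Lb_def using a that by simp
    moreover have "R m \<ge> 0" using lowb[OF that] that by simp
    ultimately show ?thesis unfolding D_def using upb[OF that] by simp
  qed
  have "D n \<le> 0"
  proof (rule ccontr)
    assume "\<not> D n \<le> 0"
    then have dp: "D n > 0" by simp
    obtain k where k: "(3* real n + 3)/D n < 2^k" using real_arch_pow[of 2 "(3* real n + 3)/D n"] by auto
    have "(3* real n + 3) < 2^k * D n" using k dp by (simp add: divide_less_eq)
    have k1: "real k + 1 \<le> 2^k" 
    proof (induction k)
      case 0 then show ?case by simp
    next
      case (Suc k)
      have "real (Suc k) + 1 = (real k + 1) + 1" by simp
      also have "\<dots> \<le> 2^k + 1" using Suc by simp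
      also have "\<dots> \<le> 2^k + 2^k" using one_le_power[of "2::real" k] by simp
      finally show ?case by simp
    qed
    have "3* real (n+k) + 1 \<le> (real k + 1) * (3* real n + 3)" using n by (simp add: algebra_simps)
    also have "\<dots> < (real k + 1) * (2^k * D n)" using \<open>(3* real n + 3) < 2^k * D n\<close> by simp
    also have "\<dots> \<le> 2^k * (2^k * D n)" using k1 dp by (intro mult_right_mono) auto
    also have "\<dots> = 4^k * D n" by (simp add: power_mult_distrib[symmetric] mult.assoc[symmetric])
    finally have A: "3* real (n+k) + 1 < 4^k * D n" .
    have "D n * 4^k \<le> D (n+k)" using iter[OF n, of k] by (simp add: divide_simps)
    with bnd[of "n+k"] n have "4^k * D n \<le> 3* real (n+k) + 1" by (simp add: mult.commute)
    with A show False by simp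
  qed
  then have "Lb (real n) - R n \<le> 0" "R n - Ub (real n) \<le> 0" unfolding D_def by simp_all
  then show ?thesis by simp
qed

lemma no_int_between:
  fixes n :: nat and M :: int
  assumes n: "n \<ge> 1"
    and lo: "(1 + sqrt 2)* real n - sqrt 2/2 < M"
    and hi: "M \<le> (1 + sqrt 2)* real n - sqrt 2/2 + 1/(4* alpha* real n)"
  shows False
proof -
  define s where "s = sqrt (2::real)"
  define q where "q = 2* real n - 1"
  define K where "K = M - int n"
  define u where "u = 2* real_of_int K - s* q"
  define e where "e = 1/(4* alpha* real n)"
  have ss: "s* s = 2" unfolding s_def by simp
  have sb: "1.41 < s" "s < 1.42" unfolding s_def using s_bounds by auto
  have ab: "2.41 < alpha" "alpha < 2.42" using alpha_bounds by auto
  have q1: "q \<ge> 1" unfolding q_def using n by simp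
  have u: "u = 2* (real_of_int M - ((1 + s)* real n - s/2))" unfolding u_def K_def q_def by (simp add: algebra_simps)
  have u0: "u > 0" using lo unfolding u s_def by simp
  have ue: "u \<le> 2* e" using hi unfolding u s_def e_def by simp
  have e0: "e > 0" unfolding e_def using n ab by simp
  have key: "u * (u + 2* s* q) = 4* (real_of_int K)^2 - 2* q^2"
  proof -
    have "u * (u + 2* s* q) = 4* (real_of_int K)^2 - (s* s)* q^2"
      unfolding u_def by (simp add: power2_eq_square algebra_simps)
    then show ?thesis unfolding ss .
  qed
  define w where "w = 2* K^2 - (2* int n - 1)^2"
  have wr: "real_of_int w = 2* (real_of_int K)^2 - q^2" unfolding w_def q_def by simp
  have sq0: "s* q > 0" using sb q1 by (intro mult_pos_pos) auto
  have pos: "u * (u + 2* s* q) > 0" using u0 sq0 by (intro mult_pos_pos) auto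
  then have "real_of_int w > 0" using key wr by simp
  then have "w \<ge> 1" by simp
  then have "real_of_int w \<ge> 1" by simp
  then have big: "u * (u + 2* s* q) \<ge> 2" using key wr by simp
  have esq: "e * (s* q) < 0.3"
  proof -
    have "e* (s* q) = s* q/(4* alpha* real n)" unfolding e_def by simp
    also have "\<dots> \<le> s* (2* real n)/(4* alpha* real n)"
      using sb q1 n ab unfolding q_def by (intro divide_right_mono mult_left_mono) auto
    also have "\<dots> = s/(2* alpha)" using n by (simp add: field_simps)
    also have "\<dots> < 0.3" using sb ab by (simp add: divide_less_eq)
    finally show ?thesis .
  qed
  have esm: "e < 0.11"
  proof -
    have "e \<le> 1/(4* alpha)" unfolding e_def using n ab by (intro divide_left_mono) (auto simp: mult_le_cancel_left1)
    also have "\<dots> < 0.11" using ab by (simp add: divide_less_eq)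
    finally show ?thesis .
  qed
  have "u * (u + 2* s* q) \<le> (2* e) * (2* e + 2* s* q)"
    using ue u0 sq0 by (intro mult_mono) auto
  also have "\<dots> = 4* (e* e) + 4* (e* (s* q))" by (simp add: algebra_simps)
  also have "\<dots> < 4* (0.11*0.11) + 4*0.3"
  proof -
    have "e* e < 0.11*0.11" using esm e0 by (intro mult_strict_mono) auto
    then show ?thesis using esq by simp
  qed
  finally show False using big by simp
qed

lemma floor_match:
  fixes n :: nat and r :: real
  assumes n: "n \<ge> 1" and lo: "Lb (real n) \<le> r" and hi: "r \<le> Ub (real n)"
  shows "\<lfloor>r + 1/2\<rfloor> = \<lfloor>(1 + sqrt 2)* real n - sqrt 2/2\<rfloor>"
proof -
  define x where "x = (1 + sqrt 2)* real n - sqrt 2/2"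
  have Lx: "Lb (real n) + 1/2 = x" unfolding Lb_def x_def alpha_def by (simp add: algebra_simps)
  have Ux: "Ub (real n) + 1/2 = x + 1/(4* alpha* real n)" unfolding Ub_def using Lx by simp
  have "\<lfloor>x\<rfloor> \<le> \<lfloor>r + 1/2\<rfloor>" using lo Lx by (intro floor_mono) simp
  moreover have "\<not> \<lfloor>r + 1/2\<rfloor> > \<lfloor>x\<rfloor>"
  proof
    assume g: "\<lfloor>r + 1/2\<rfloor> > \<lfloor>x\<rfloor>"
    have "x < real_of_int \<lfloor>r + 1/2\<rfloor>" using g by (meson floor_less_iff less_le_trans not_le of_int_floor_le) 
    moreover have "real_of_int \<lfloor>r + 1/2\<rfloor> \<le> x + 1/(4* alpha* real n)" using hi Ux of_int_floor_le[of "r+1/2"] by linarith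
    ultimately show False using no_int_between[OF n] unfolding x_def by blast
  qed
  ultimately show ?thesis unfolding x_def by simp
qed



lemma rel_Suc: "real (m+1) * II m - 2* (2* real m+3) * II (m+1) - 4* (real m+2) * II (m+2) = 0"
proof -
  have "GI (Suc m) 1 = 0" "GI (Suc m) 0 = 0" unfolding GI_def by simp_all
  then show ?thesis using II_rel[of "Suc m"] by (simp add: algebra_simps)
qed

lemma r_formula: "r_seq (Suc (Suc m)) = real (m+1) * II m / (2 * II (m+1))"
proof (induction m)
  case 0
  have p: "pi < 4" "pi > 3" using pi_less_4 pi_gt3 by auto
  have "r_seq (Suc (Suc 0)) = 1 / (4/pi - 1)" by (simp add: power2_eq_square)
  also have "\<dots> = pi/(4-pi)" using p by (simp add: field_simps)
  also have "\<dots> = real (0+1) * II 0 / (2 * II (0+1))"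
  proof -
    have i1: "II (0+1) = (4-pi)/8" using II1 by simp
    show ?thesis using p unfolding II0 i1 by (simp add: field_simps)
  qed
  finally show ?case .
next
  case (Suc m)
  have I1: "II (m+1) > 0" and I2: "II (m+2) > 0" using II_pos by auto
  have e: "real (m+1) * II m / (2 * II (m+1)) - (2* real m + 3) = 2* (real m+2)* II(m+2)/II(m+1)"
    using rel_Suc[of m] I1 by (simp add: field_simps)
  have "r_seq (Suc (Suc (Suc m))) = (real (Suc (Suc m)))^2 / (r_seq (Suc (Suc m)) - (2 * real (Suc (Suc m)) - 1))"
    by simp
  also have "\<dots> = (real m + 2)^2 / (2* (real m+2)* II(m+2)/II(m+1))"
    using Suc e by (simp add: algebra_simps)
  also have "\<dots> = (real m + 2) * II (m+1) / (2 * II (m+2))"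
  proof -
    have ab: "\<And>A I1 I2 :: real. A > 0 \<Longrightarrow> I1 > 0 \<Longrightarrow> I2 > 0 \<Longrightarrow> A^2/(2* A* I2/I1) = A* I1/(2* I2)"
      by (simp add: field_simps power2_eq_square)
    show ?thesis by (rule ab) (use I1 I2 in auto)
  qed
  also have "\<dots> = real (Suc m + 1) * II (Suc m) / (2 * II (Suc m + 1))" by simp
  finally show ?case .
qed

lemma r_alt: "r_seq (Suc (Suc m)) = (2* real m+3) + 2* (real m+2)* II(m+2)/II(m+1)"
proof -
  have I1: "II (m+1) > 0" using II_pos by auto
  have "real (m+1) * II m / (2 * II (m+1)) - (2* real m + 3) = 2* (real m+2)* II(m+2)/II(m+1)"
    using rel_Suc[of m] I1 by (simp add: field_simps)
  then show ?thesis unfolding r_formula by simp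
qed

lemma r_bounds: assumes n: "n \<ge> 1"
  shows "r_seq n > 2* real n - 1" "r_seq n \<le> 3* real n"
proof -
  have "r_seq n > 2* real n - 1 \<and> r_seq n \<le> 3* real n"
  proof (cases n)
    case 0 then show ?thesis using n by simp
  next
    case (Suc k)
    show ?thesis
    proof (cases k)
      case 0
      have p: "pi < 4" "pi > 3" using pi_less_4 pi_gt3 by auto
      have "4/pi > 1" using p by simp
      moreover have "4/pi \<le> 3" using p by (simp add: divide_le_eq)
      ultimately show ?thesis using Suc 0 by simp
    next
      case (Suc m)
      have I1: "II (m+1) > 0" and I2: "II (m+2) > 0" using II_pos by auto
      define Q where "Q = 2* (real m+2)* II(m+2)/II(m+1)"
      have q0: "Q > 0" unfolding Q_def using I1 I2 by simp
      have "II(m+2) \<le> II(m+1)/4" using II_le[of "m+1"] by simp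
      then have "2* (real m+2)* II(m+2) \<le> 2* (real m+2)* (II(m+1)/4)" by (intro mult_left_mono) auto
      also have "\<dots> = (real m+2)/2 * II(m+1)" by simp
      finally have X: "2* (real m+2)* II(m+2) \<le> (real m+2)/2 * II(m+1)" .
      have q1: "Q \<le> (real m+2)/2" unfolding Q_def using X I1 by (simp add: pos_divide_le_eq)
      have rn: "r_seq n = (2* real m+3) + Q"
        unfolding Q_def using r_alt[of m] \<open>n = Suc k\<close> Suc by simp
      have nn: "real n = real m + 2" using \<open>n = Suc k\<close> Suc by simp
      have q2: "2* Q \<le> real m + 2" using q1 by (simp add: field_simps)
      show ?thesis unfolding rn nn using q0 q2 by (simp add: algebra_simps)
    qed
  qed
  then show "r_seq n > 2* real n - 1" "r_seq n \<le> 3* real n" by auto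
qed

lemma r_rec: assumes n: "n \<ge> 1"
  shows "r_seq n = 2* real n - 1 + (real n)^2 / r_seq (n+1)"
proof -
  obtain k where k: "n = Suc k" using n by (cases n) auto
  have pos: "r_seq n - (2* real n - 1) > 0" using r_bounds(1)[OF n] by simp
  have pos2: "r_seq (n+1) > 0" using r_bounds(1)[of "n+1"] by simp
  have "r_seq (n+1) = (real n)^2 / (r_seq n - (2* real n - 1))" using k by simp
  then have "(real n)^2 / r_seq (n+1) = r_seq n - (2* real n - 1)"
    using pos pos2 n by (simp add: field_simps)
  then show ?thesis by simp
qed

theorem part4: "\<forall>n\<ge>1. r_seq n \<noteq> 2 * real n - 1"
  using r_bounds(1) by force

theorem part5: "\<forall>n\<ge>1. e_seq n = d_seq n"
proof (intro allI impI)
  fix n :: nat assume n: "n \<ge> 1"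
  have "Lb (real n) \<le> r_seq n \<and> r_seq n \<le> Ub (real n)"
  proof (rule interval_all[of r_seq, OF r_rec _ _ n])
    fix m :: nat assume m: "m \<ge> 1"
    show "r_seq m \<ge> 2* real m - 1" using r_bounds(1)[OF m] by simp
    show "r_seq m \<le> 3* real m" using r_bounds(2)[OF m] .
  qed
  then have "\<lfloor>r_seq n + 1/2\<rfloor> = \<lfloor>(1 + sqrt 2)* real n - sqrt 2/2\<rfloor>"
    using floor_match[OF n] by auto
  then show "e_seq n = d_seq n" unfolding e_seq_def d_seq_def by simp
qed



definition Yi :: "int \<Rightarrow> real" where "Yi m = sqrt 2 * (2 * of_int m - 1) / 2"

lemma odd_irr: assumes "odd (q::int)" shows "sqrt 2 * of_int q \<noteq> 2 * of_int j"
proof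
  assume h: "sqrt 2 * of_int q = 2 * of_int j"
  then have "(sqrt 2 * of_int q)^2 = (2 * of_int j)^2" by simp
  then have "2 * (of_int q)^2 = (4::real) * (of_int j)^2" by (simp add: power_mult_distrib)
  then have "of_int (q^2) = (of_int (2* j^2) :: real)" by simp
  then have e: "q^2 = 2* j^2" by (simp only: of_int_eq_iff)
  have "odd (q^2)" using assms by simp
  moreover have "even (q^2)" unfolding e by simp
  ultimately show False by simp
qed

lemma d_form: "d_seq n = int n + \<lfloor>Yi (int n)\<rfloor>"
proof -
  have "(1 + sqrt 2) * real n - sqrt 2 / 2 = Yi (int n) + of_int (int n)"
    unfolding Yi_def by (simp add: field_simps)
  then show ?thesis unfolding d_seq_def by (simp add: floor_add_int[symmetric])
qed

lemma Yi_succ: "Yi (m+1) = Yi m + sqrt 2" unfolding Yi_def by (simp add: field_simps)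

lemma sYi: "sqrt 2 * Yi m = 2 * of_int m - 1"
proof -
  have "sqrt 2 * Yi m = (sqrt 2 * sqrt 2) * (2 * of_int m - 1) / 2"
    unfolding Yi_def by (simp only: times_divide_eq_right mult.assoc)
  then show ?thesis by simp
qed

lemma Yi_not_int: "Yi m \<noteq> of_int j"
proof
  assume "Yi m = of_int j"
  then have "sqrt 2 * of_int (2* m-1) = 2 * of_int j" unfolding Yi_def by (simp add: field_simps)
  moreover have "odd (2* m-1)" by simp
  ultimately show False using odd_irr by blast
qed

lemma floor_step: "\<lfloor>Yi m + sqrt 2\<rfloor> = \<lfloor>Yi m\<rfloor> + 1 \<or> \<lfloor>Yi m + sqrt 2\<rfloor> = \<lfloor>Yi m\<rfloor> + 2"
proof -
  have sb: "1 < sqrt (2::real)" "sqrt (2::real) < 2" using s_bounds by auto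
  have f1: "of_int \<lfloor>Yi m\<rfloor> \<le> Yi m" "Yi m < of_int \<lfloor>Yi m\<rfloor> + 1" by (simp_all add: floor_correct)
  have "of_int \<lfloor>Yi m\<rfloor> + 1 \<le> Yi m + sqrt 2" using f1 sb by linarith
  then have "of_int (\<lfloor>Yi m\<rfloor> + 1) \<le> Yi m + sqrt 2" by simp
  then have a: "\<lfloor>Yi m\<rfloor> + 1 \<le> \<lfloor>Yi m + sqrt 2\<rfloor>" by (simp only: le_floor_iff)
  have "Yi m + sqrt 2 < of_int \<lfloor>Yi m\<rfloor> + 2 + 1" using f1 sb by linarith
  then have "Yi m + sqrt 2 < of_int (\<lfloor>Yi m\<rfloor> + 2) + 1" by simp
  then have b: "\<lfloor>Yi m + sqrt 2\<rfloor> \<le> \<lfloor>Yi m\<rfloor> + 2" by (simp only: floor_le_iff)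
  show ?thesis using a b by linarith
qed

lemma mem_imp: assumes k: "k \<ge> 1" and m: "m = k + \<lfloor>Yi k\<rfloor>"
  shows "\<lfloor>Yi m + sqrt 2\<rfloor> = \<lfloor>Yi m\<rfloor> + 2"
proof -
  define s where "s = sqrt (2::real)"
  have sb: "1.41 < s" "s < 1.42" unfolding s_def using s_bounds by auto
  define F where "F = \<lfloor>Yi k\<rfloor>"
  define g where "g = Yi k - of_int F"
  have g0: "g \<ge> 0" "g < 1" unfolding g_def F_def by (simp_all add: floor_correct) linarith
  have g1: "g \<noteq> 0" unfolding g_def using Yi_not_int[of k F] by simp
  then have gp: "g > 0" using g0 by simp
  define N where "N = F + 2* k - 1"
  have ym: "Yi m = of_int N + g* (1-s)"
  proof -
    have "Yi m = s* (2* of_int k + 2* of_int F - 1)/2" unfolding Yi_def m s_def F_def by simp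
    also have "\<dots> = Yi k + s * of_int F" unfolding Yi_def s_def by (simp add: field_simps)
    also have "\<dots> = Yi k + s * (Yi k - g)" unfolding g_def by simp
    also have "\<dots> = Yi k + s* Yi k - s* g" by (simp add: algebra_simps)
    also have "\<dots> = Yi k + (2* of_int k - 1) - s* g" using sYi[of k] unfolding s_def by simp
    also have "\<dots> = of_int N + g* (1-s)" unfolding N_def g_def by (simp add: algebra_simps)
    finally show ?thesis .
  qed
  have f1: "\<lfloor>Yi m\<rfloor> = N - 1"
  proof (rule floor_unique)
    have "g* (s-1) < 1*1" using g0 gp sb by (intro mult_strict_mono) auto
    then show "of_int (N - 1) \<le> Yi m" unfolding ym by (simp add: algebra_simps)
    have "g* (s-1) > 0" using gp sb by simp
    then show "Yi m < of_int (N - 1) + 1" unfolding ym by (simp add: algebra_simps)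
  qed
  have f2: "\<lfloor>Yi m + sqrt 2\<rfloor> = N + 1"
  proof (rule floor_unique)
    have "g* (s-1) < 1* (s-1)" using g0 sb by (intro mult_strict_right_mono) auto
    then show "of_int (N + 1) \<le> Yi m + sqrt 2" unfolding ym s_def[symmetric] by (simp add: algebra_simps)
    have "g* (s-1) > 0" using gp sb by simp
    then show "Yi m + sqrt 2 < of_int (N + 1) + 1" unfolding ym s_def[symmetric] using sb by (simp add: algebra_simps)
  qed
  show ?thesis using f1 f2 by simp
qed

lemma mem_conv: assumes m: "m \<ge> 1" and h: "\<lfloor>Yi m + sqrt 2\<rfloor> = \<lfloor>Yi m\<rfloor> + 2"
  shows "\<exists>k\<ge>1. m = k + \<lfloor>Yi k\<rfloor>"
proof -
  define s where "s = sqrt (2::real)"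
  have sb: "1.41 < s" "s < 1.42" unfolding s_def using s_bounds by auto
  have ss: "s* s = 2" unfolding s_def by simp
  define N where "N = \<lfloor>Yi m\<rfloor>"
  define y where "y = Yi m"
  have yN: "of_int N \<le> y" "y < of_int N + 1" unfolding N_def y_def by (simp_all add: floor_correct)
  have "of_int \<lfloor>Yi m + sqrt 2\<rfloor> \<le> Yi m + sqrt 2" by (rule of_int_floor_le)
  then have yl: "y + s \<ge> of_int N + 2" using h unfolding N_def y_def s_def by simp
  have yne: "y + s \<noteq> of_int N + 2"
  proof
    assume "y + s = of_int N + 2"
    then have "Yi (m+1) = of_int (N+2)" unfolding y_def s_def Yi_succ by simp
    then show False using Yi_not_int by blast
  qed
  have yl2: "y > of_int N + 2 - s" using yl yne by simp
  have sy: "s* y = 2* of_int m - 1" unfolding y_def s_def by (rule sYi)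
  define k where "k = N + 2 - m"
  have Yk: "Yi k = s* (of_int N + 1) - y"
    unfolding Yi_def k_def y_def s_def by (simp add: field_simps)
  have lo: "of_int (m - k) \<le> Yi k"
  proof -
    have "(1+s)* y \<le> (1+s)* (of_int N + 1)" using yN sb by (intro mult_left_mono) auto
    then have "s* y - of_int N - 1 \<le> s* (of_int N + 1) - y" by (simp add: algebra_simps)
    then show ?thesis unfolding Yk unfolding k_def using sy by (simp add: algebra_simps)
  qed
  have hi: "Yi k < of_int (m - k) + 1"
  proof -
    have "(1+s)* (of_int N + 2 - s) < (1+s)* y" using yl2 sb by (intro mult_strict_left_mono) auto
    moreover have "(1+s)* (of_int N + 2 - s) = s* (of_int N + 1) + of_int N"
      using ss by (simp add: algebra_simps)
    ultimately have "s* (of_int N + 1) - y < s* y - of_int N" by (simp add: algebra_simps)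
    then show ?thesis unfolding Yk unfolding k_def using sy by (simp add: algebra_simps)
  qed
  have fk: "\<lfloor>Yi k\<rfloor> = m - k" using lo hi by (rule floor_unique)
  have kpos: "k \<ge> 1"
  proof -
    have "of_int k > y + 1 - of_int m" unfolding k_def using yN by simp
    moreover have "y + 1 - of_int m = (of_int m - 1)* (s-1) + s/2"
      unfolding y_def Yi_def s_def by (simp add: field_simps)
    moreover have "(of_int m - 1)* (s-1) \<ge> 0" using m sb by simp
    ultimately have "of_int k > (0::real)" using sb by linarith
    then show ?thesis by simp
  qed
  show ?thesis using kpos fk by (intro exI[of _ k]) simp
qed

definition Dset :: "int set" where "Dset = d_seq ` {1..}"

lemma Yi_pos: "m \<ge> 1 \<Longrightarrow> Yi m > 0"
  unfolding Yi_def by (simp add: mult_pos_pos)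

lemma d_pos: "n \<ge> 1 \<Longrightarrow> d_seq n \<ge> 1"
proof -
  assume n: "n \<ge> 1"
  then have f: "\<lfloor>Yi (int n)\<rfloor> \<ge> 0" using Yi_pos[of "int n"] by simp
  have "int n \<ge> 1" using n by simp
  then show ?thesis unfolding d_form using f by linarith
qed

lemma Dset_iff: "m \<in> Dset \<longleftrightarrow> m \<ge> 1 \<and> \<lfloor>Yi m + sqrt 2\<rfloor> = \<lfloor>Yi m\<rfloor> + 2"
proof
  assume "m \<in> Dset"
  then obtain n where n: "n \<ge> 1" "m = d_seq n" unfolding Dset_def by auto
  then have "m = int n + \<lfloor>Yi (int n)\<rfloor>" using d_form by simp
  then show "m \<ge> 1 \<and> \<lfloor>Yi m + sqrt 2\<rfloor> = \<lfloor>Yi m\<rfloor> + 2"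
    using mem_imp[of "int n" m] n d_pos[of n] by simp
next
  assume "m \<ge> 1 \<and> \<lfloor>Yi m + sqrt 2\<rfloor> = \<lfloor>Yi m\<rfloor> + 2"
  then obtain k where k: "k \<ge> 1" "m = k + \<lfloor>Yi k\<rfloor>" using mem_conv by blast
  then have "m = d_seq (nat k)" using d_form[of "nat k"] by simp
  moreover have "nat k \<ge> 1" using k by simp
  ultimately show "m \<in> Dset" unfolding Dset_def by auto
qed

lemma d_step: "d_seq (Suc n) - d_seq n = (if int n \<in> Dset then 3 else 2)" if "n \<ge> 1"
proof -
  have "d_seq (Suc n) - d_seq n = 1 + \<lfloor>Yi (int n) + sqrt 2\<rfloor> - \<lfloor>Yi (int n)\<rfloor>"
    unfolding d_form using Yi_succ[of "int n"] by (simp add: add.commute)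
  then show ?thesis using floor_step[of "int n"] Dset_iff[of "int n"] that by auto
qed



lemma d1: "d_seq 1 = 1"
proof -
  have y: "\<lfloor>Yi 1\<rfloor> = 0"
  proof (rule floor_unique)
    show "of_int 0 \<le> Yi 1" unfolding Yi_def by simp
    show "Yi 1 < of_int 0 + 1" unfolding Yi_def using s_bounds by simp
  qed
  show ?thesis using d_form[of 1] y by simp
qed

lemma d_inc: "n \<ge> 1 \<Longrightarrow> d_seq (Suc n) \<ge> d_seq n + 2"
  using d_step[of n] by (auto split: if_splits)

lemma growth_mono:
  fixes f :: "nat \<Rightarrow> int"
  assumes g: "\<And>n. n \<ge> 1 \<Longrightarrow> f (Suc n) \<ge> f n + 2"
  shows "1 \<le> k \<Longrightarrow> k < l \<Longrightarrow> f k + 2 \<le> f l"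
proof (induction l)
  case 0 then show ?case by simp
next
  case (Suc l)
  show ?case
  proof (cases "k = l")
    case True then show ?thesis using g Suc.prems by simp
  next
    case False
    then have "f k + 2 \<le> f l" using Suc by simp
    moreover have "f l + 2 \<le> f (Suc l)" using g Suc.prems False by simp
    ultimately show ?thesis by simp
  qed
qed

lemma growth_lower:
  fixes f :: "nat \<Rightarrow> int"
  assumes g: "\<And>n. n \<ge> 1 \<Longrightarrow> f (Suc n) \<ge> f n + 2" and f1: "f 1 = 1"
  shows "k \<ge> 1 \<Longrightarrow> f k \<ge> 2 * int k - 1"
proof (induction k)
  case 0 then show ?case by simp
next
  case (Suc k)
  show ?case
  proof (cases "k = 0")
    case True then show ?thesis using f1 by simp
  next
    case False
    then have "f k \<ge> 2 * int k - 1" using Suc by simp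
    moreover have "f (Suc k) \<ge> f k + 2" using g False by simp
    ultimately show ?thesis by simp
  qed
qed

lemma img_bound:
  fixes f :: "nat \<Rightarrow> int"
  assumes g: "\<And>n. n \<ge> 1 \<Longrightarrow> f (Suc n) \<ge> f n + 2" and f1: "f 1 = 1"
    and n: "n \<ge> 2" and j: "j \<le> int n"
  shows "j \<in> f ` {1..} \<longleftrightarrow> (\<exists>k. 1 \<le> k \<and> k < n \<and> f k = j)"
proof
  assume "j \<in> f ` {1..}"
  then obtain k where k: "k \<ge> 1" "f k = j" by auto
  have "2 * int k - 1 \<le> f k" using growth_lower[OF g f1 k(1)] .
  then have "k < n" using k j n by linarith
  then show "\<exists>k. 1 \<le> k \<and> k < n \<and> f k = j" using k by blast
qed auto

lemma d_img_eq: "d_seq ` {1..} = Dset" unfolding Dset_def ..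

lemma no_consec: "m \<in> Dset \<Longrightarrow> m + 1 \<notin> Dset"
proof
  assume a: "m \<in> Dset" and b: "m + 1 \<in> Dset"
  obtain k where k: "k \<ge> 1" "d_seq k = m" using a unfolding Dset_def by auto
  obtain j where j: "j \<ge> 1" "d_seq j = m + 1" using b unfolding Dset_def by auto
  have "j \<noteq> k" using j k by auto
  then consider "j < k" | "k < j" by linarith
  then show False
  proof cases
    case 1 then have "d_seq j + 2 \<le> d_seq k" using growth_mono[of d_seq, OF d_inc] j by blast
    then show False using j k by simp
  next
    case 2 then have "d_seq k + 2 \<le> d_seq j" using growth_mono[of d_seq, OF d_inc] k by blast
    then show False using j k by simp
  qed
qed

lemma d_step2: assumes n2: "n \<ge> 2"
  shows "d_seq n = d_seq (n-1) + (if int (n-1) \<in> Dset then 3 else 2)"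
proof -
  have "d_seq (Suc (n-1)) - d_seq (n-1) = (if int (n-1) \<in> Dset then 3 else 2)"
    using d_step[of "n-1"] n2 by simp
  moreover have "Suc (n-1) = n" using n2 by simp
  ultimately show ?thesis by simp
qed

theorem part2: "\<forall>b. isB b \<longleftrightarrow> (\<forall>n\<ge>1. b n = d_seq n)"
proof (rule allI, rule iffI)
  fix b :: "nat \<Rightarrow> int"
  assume B: "isB b"
  have b1: "b 1 = 1" using B unfolding isB_def by simp
  have BB: "\<forall>n\<ge>2. (int (n-1) \<notin> b ` {1..} \<longrightarrow> b n = b (n-1) + 2) \<and>
        (int (n-1) \<in> b ` {1..} \<longrightarrow> b n = b (n-1) + 3)"
    using B unfolding isB_def by (rule conjunct2)
  have brec: "\<And>n. n \<ge> 2 \<Longrightarrow> b n = b (n-1) + (if int (n-1) \<in> b ` {1..} then 3 else 2)"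
  proof -
    fix n :: nat assume n2: "n \<ge> 2"
    note h = BB[rule_format, OF n2]
    show "b n = b (n-1) + (if int (n-1) \<in> b ` {1..} then 3 else 2)"
      using h by (cases "int (n-1) \<in> b ` {1..}") simp_all
  qed
  have bg: "\<And>n. n \<ge> 1 \<Longrightarrow> b (Suc n) \<ge> b n + 2"
  proof -
    fix n :: nat assume "n \<ge> 1"
    then have "b (Suc n) = b n + (if int n \<in> b ` {1..} then 3 else 2)" using brec[of "Suc n"] by simp
    then show "b (Suc n) \<ge> b n + 2" by (simp split: if_splits)
  qed
  show "\<forall>n\<ge>1. b n = d_seq n"
  proof (intro allI impI)
    fix n :: nat assume "n \<ge> 1"
    then show "b n = d_seq n"
    proof (induction n rule: less_induct)
      case (less n)
      show ?case
      proof (cases "n = 1")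
        case True then show ?thesis using b1 d1 by simp
      next
        case False
        then have n2: "n \<ge> 2" using less.prems by simp
        have jn: "int (n-1) \<le> int n" by simp
        have "int (n-1) \<in> b ` {1..} \<longleftrightarrow> (\<exists>k. 1 \<le> k \<and> k < n \<and> b k = int (n-1))"
          by (rule img_bound[of b, OF bg b1 n2 jn])
        also have "\<dots> \<longleftrightarrow> (\<exists>k. 1 \<le> k \<and> k < n \<and> d_seq k = int (n-1))"
          using less.IH by auto
        also have "\<dots> \<longleftrightarrow> int (n-1) \<in> d_seq ` {1..}"
          by (rule img_bound[of d_seq, OF d_inc d1 n2 jn, symmetric])
        finally have mem: "int (n-1) \<in> b ` {1..} \<longleftrightarrow> int (n-1) \<in> Dset" unfolding d_img_eq .
        have "b n = b (n-1) + (if int (n-1) \<in> Dset then 3 else 2)" using brec[OF n2] mem by simp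
        moreover have "b (n-1) = d_seq (n-1)" using less.IH[of "n-1"] n2 by simp
        moreover have "d_seq n = d_seq (n-1) + (if int (n-1) \<in> Dset then 3 else 2)"
          using d_step2[OF n2] .
        ultimately show ?thesis by simp
      qed
    qed
  qed
next
  fix b :: "nat \<Rightarrow> int"
  assume H: "\<forall>n\<ge>1. b n = d_seq n"
  have img: "b ` {1..} = Dset" unfolding Dset_def using H by (auto intro!: image_cong)
  show "isB b" unfolding isB_def img
  proof (intro conjI allI impI)
    show "b 1 = 1" using H d1 by simp
  next
    fix n :: nat assume n2: "n \<ge> 2" "int (n-1) \<notin> Dset"
    then show "b n = b (n-1) + 2" using H d_step2[OF n2(1)] by simp
  next
    fix n :: nat assume n2: "n \<ge> 2" "int (n-1) \<in> Dset"
    then show "b n = b (n-1) + 3" using H d_step2[OF n2(1)] by simp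
  qed
qed

theorem part1: "\<forall>a. isA a \<longleftrightarrow> (\<forall>n\<ge>1. a n = d_seq n)"
proof (rule allI, rule iffI)
  fix a :: "nat \<Rightarrow> int"
  assume A: "isA a"
  have a1: "a 1 = 1" using A unfolding isA_def by simp
  define Delta where "Delta S n = (if int n \<notin> S \<and> int (n-1) \<in> S then 3 else (2::int))" for S n
  have AA: "\<forall>n\<ge>2.
        (int n \<in> a ` {1..} \<longrightarrow> a n = a (n-1) + 2) \<and>
        (int n \<notin> a ` {1..} \<and> int (n-1) \<notin> a ` {1..} \<longrightarrow> a n = a (n-1) + 2) \<and>
        (int n \<notin> a ` {1..} \<and> int (n-1) \<in> a ` {1..} \<longrightarrow> a n = a (n-1) + 3)"
    using A unfolding isA_def by (rule conjunct2)
  have arec: "\<And>n. n \<ge> 2 \<Longrightarrow> a n = a (n-1) + Delta (a ` {1..}) n"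
  proof -
    fix n :: nat assume n2: "n \<ge> 2"
    note h = AA[rule_format, OF n2]
    show "a n = a (n-1) + Delta (a ` {1..}) n" unfolding Delta_def
      using h by (cases "int n \<in> a ` {1..}"; cases "int (n-1) \<in> a ` {1..}") simp_all
  qed
  have ag: "\<And>n. n \<ge> 1 \<Longrightarrow> a (Suc n) \<ge> a n + 2"
  proof -
    fix n :: nat assume "n \<ge> 1"
    then have "a (Suc n) = a n + Delta (a ` {1..}) (Suc n)" using arec[of "Suc n"] by simp
    then show "a (Suc n) \<ge> a n + 2" unfolding Delta_def by (simp split: if_splits)
  qed
  have drec: "\<And>n. n \<ge> 2 \<Longrightarrow> d_seq n = d_seq (n-1) + Delta Dset n"
  proof -
    fix n :: nat assume n2: "n \<ge> 2"
    have st: "d_seq n = d_seq (n-1) + (if int (n-1) \<in> Dset then 3 else 2)"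
      using d_step2[OF n2] .
    show "d_seq n = d_seq (n-1) + Delta Dset n"
    proof (cases "int (n-1) \<in> Dset")
      case True
      then have "int n \<notin> Dset" using no_consec[of "int (n-1)"] n2 by (simp add: of_nat_diff)
      then show ?thesis using st True unfolding Delta_def by simp
    next
      case False then show ?thesis using st unfolding Delta_def by simp
    qed
  qed
  show "\<forall>n\<ge>1. a n = d_seq n"
  proof (intro allI impI)
    fix n :: nat assume "n \<ge> 1"
    then show "a n = d_seq n"
    proof (induction n rule: less_induct)
      case (less n)
      show ?case
      proof (cases "n = 1")
        case True then show ?thesis using a1 d1 by simp
      next
        case False
        then have n2: "n \<ge> 2" using less.prems by simp
        have memj: "int j \<in> a ` {1..} \<longleftrightarrow> int j \<in> Dset" if "j \<le> n" for j
        proof -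
          have jn: "int j \<le> int n" using that by simp
          have "int j \<in> a ` {1..} \<longleftrightarrow> (\<exists>k. 1 \<le> k \<and> k < n \<and> a k = int j)"
            by (rule img_bound[of a, OF ag a1 n2 jn])
          also have "\<dots> \<longleftrightarrow> (\<exists>k. 1 \<le> k \<and> k < n \<and> d_seq k = int j)"
            using less.IH by auto
          also have "\<dots> \<longleftrightarrow> int j \<in> d_seq ` {1..}"
            by (rule img_bound[of d_seq, OF d_inc d1 n2 jn, symmetric])
          finally show ?thesis unfolding d_img_eq .
        qed
        have "Delta (a ` {1..}) n = Delta Dset n"
          unfolding Delta_def using memj[of n] memj[of "n-1"] by simp
        moreover have "a (n-1) = d_seq (n-1)" using less.IH[of "n-1"] n2 by simp
        ultimately show ?thesis using arec[OF n2] drec[OF n2] by simp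
      qed
    qed
  qed
next
  fix a :: "nat \<Rightarrow> int"
  assume H: "\<forall>n\<ge>1. a n = d_seq n"
  have img: "a ` {1..} = Dset" unfolding Dset_def using H by (auto intro!: image_cong)
  have st: "\<And>n. n \<ge> 2 \<Longrightarrow> a n = a (n-1) + (if int (n-1) \<in> Dset then 3 else 2)"
  proof -
    fix n :: nat assume n2: "n \<ge> 2"
    have "d_seq (Suc (n-1)) - d_seq (n-1) = (if int (n-1) \<in> Dset then 3 else 2)"
      using d_step[of "n-1"] n2 by simp
    moreover have "Suc (n-1) = n" using n2 by simp
    moreover have "a n = d_seq n" "a (n-1) = d_seq (n-1)" using H n2 by simp_all
    ultimately show "a n = a (n-1) + (if int (n-1) \<in> Dset then 3 else 2)" by simp
  qed
  show "isA a" unfolding isA_def img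
  proof (intro conjI allI impI)
    show "a 1 = 1" using H d1 by simp
  next
    fix n :: nat assume n2: "n \<ge> 2" "int n \<in> Dset"
    then have "int (n-1) \<notin> Dset" using no_consec[of "int (n-1)"] by (auto simp: of_nat_diff)
    then show "a n = a (n-1) + 2" using st[OF n2(1)] by simp
  next
    fix n :: nat assume n2: "n \<ge> 2" "int n \<notin> Dset \<and> int (n-1) \<notin> Dset"
    then show "a n = a (n-1) + 2" using st[OF n2(1)] by simp
  next
    fix n :: nat assume n2: "n \<ge> 2" "int n \<notin> Dset \<and> int (n-1) \<in> Dset"
    then show "a n = a (n-1) + 3" using st[OF n2(1)] by simp
  qed
qed



definition chi :: "nat \<Rightarrow> nat" where "chi i = (if int i \<in> Dset then 0 else 1)"
definition dn :: "nat \<Rightarrow> nat" where "dn k = nat (d_seq k)"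

lemma dn_int: "k \<ge> 1 \<Longrightarrow> int (dn k) = d_seq k"
  unfolding dn_def using d_pos[of k] by simp

lemma d_in: "k \<ge> 1 \<Longrightarrow> d_seq k \<in> Dset" unfolding Dset_def by auto

lemma d_mono_strict: "1 \<le> j \<Longrightarrow> j < k \<Longrightarrow> d_seq j + 2 \<le> d_seq k"
  using growth_mono[of d_seq, OF d_inc] by blast

lemma d_le_iff: "1 \<le> j \<Longrightarrow> 1 \<le> k \<Longrightarrow> d_seq j \<le> d_seq k \<longleftrightarrow> j \<le> k"
proof -
  assume j: "1 \<le> j" and k: "1 \<le> k"
  show ?thesis
  proof
    assume "d_seq j \<le> d_seq k"
    then show "j \<le> k" using d_mono_strict[OF k, of j] by (cases "k < j") auto
  next
    assume "j \<le> k"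
    then show "d_seq j \<le> d_seq k" using d_mono_strict[OF j, of k] by (cases "j = k") auto
  qed
qed

lemma between: assumes k: "k \<ge> 1" and i: "d_seq k < i" "i < d_seq (Suc k)"
  shows "i \<notin> Dset"
proof
  assume "i \<in> Dset"
  then obtain j where j: "j \<ge> 1" "i = d_seq j" unfolding Dset_def by auto
  show False
  proof (cases "j \<le> k")
    case True then have "d_seq j \<le> d_seq k" using d_le_iff j k by simp
    then show False using i j by simp
  next
    case False then have "d_seq (Suc k) \<le> d_seq j" using d_le_iff[of "Suc k" j] j k by simp
    then show False using i j by simp
  qed
qed

lemma phi_Nil: "phi [] = []" unfolding phi_def by simp
lemma phi_append: "phi (xs @ ys) = phi xs @ phi ys" unfolding phi_def by simp
lemma phi_single: "phi [x] = phi_letter x" unfolding phi_def by simp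

lemma block: assumes k: "k \<ge> 1"
  shows "map chi [dn k..<dn (Suc k)] = phi_letter (chi k)"
proof -
  define A where "A = dn k"
  have Ai: "int A = d_seq k" unfolding A_def using dn_int[OF k] .
  have A0: "chi A = 0" unfolding chi_def using Ai d_in[OF k] by simp
  have A1: "chi (A+1) = 1"
    unfolding chi_def using between[OF k, of "int (A+1)"] Ai d_step[OF k] by (auto split: if_splits)
  have B: "int (dn (Suc k)) = d_seq (Suc k)" using dn_int[of "Suc k"] by simp
  show ?thesis
  proof (cases "int k \<in> Dset")
    case True
    then have st: "d_seq (Suc k) = d_seq k + 3" using d_step[OF k] by simp
    then have "dn (Suc k) = A + 3" using Ai B by simp
    moreover have "chi (A+2) = 1"
      unfolding chi_def using between[OF k, of "int (A+2)"] Ai st by auto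
    moreover have "[A..<A+3] = [A, A+1, A+2]" by (simp add: numeral_3_eq_3 upt_rec)
    moreover have "chi k = 0" unfolding chi_def using True by simp
    ultimately show ?thesis using A0 A1 unfolding A_def[symmetric] by simp
  next
    case False
    then have st: "d_seq (Suc k) = d_seq k + 2" using d_step[OF k] by simp
    then have "dn (Suc k) = A + 2" using Ai B by simp
    moreover have "[A..<A+2] = [A, A+1]" by (simp add: numeral_2_eq_2 upt_rec)
    moreover have "chi k = 1" unfolding chi_def using False by simp
    ultimately show ?thesis using A0 A1 unfolding A_def[symmetric] by simp
  qed
qed

lemma dn1: "dn 1 = 1" unfolding dn_def using d1 by simp

lemma dn_mono: "1 \<le> j \<Longrightarrow> j \<le> k \<Longrightarrow> dn j \<le> dn k"
  using d_le_iff[of j k] unfolding dn_def by simp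

lemma phi_prefix: "phi (map chi [1..<L+1]) = map chi [1..<dn (L+1)]"
proof (induction L)
  case 0 then show ?case using dn1 phi_Nil by simp
next
  case (Suc L)
  have "[1..<Suc L + 1] = [1..<L+1] @ [L+1]" by simp
  then have "phi (map chi [1..<Suc L + 1]) = phi (map chi [1..<L+1]) @ phi_letter (chi (L+1))"
    by (simp add: phi_append phi_single)
  also have "\<dots> = map chi [1..<dn (L+1)] @ map chi [dn (L+1)..<dn (Suc (L+1))]"
    using Suc block[of "L+1"] by simp
  also have "\<dots> = map chi ([1..<dn (L+1)] @ [dn (L+1)..<dn (Suc (L+1))])" by simp
  also have "[1..<dn (L+1)] @ [dn (L+1)..<dn (Suc (L+1))] = [1..<dn (Suc L + 1)]"
  proof -
    have "1 \<le> dn (L+1)" using dn_mono[of 1 "L+1"] dn1 by simp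
    moreover have "dn (L+1) \<le> dn (Suc (L+1))" using dn_mono[of "L+1" "Suc (L+1)"] by simp
    ultimately show ?thesis using upt_add_eq_append[of 1 "dn (L+1)" "dn (Suc (L+1)) - dn (L+1)"] by simp
  qed
  finally show ?case .
qed

lemma dn_lower: "k \<ge> 1 \<Longrightarrow> dn k \<ge> 2* k - 1"
proof -
  assume k: "k \<ge> 1"
  have "d_seq k \<ge> 2 * int k - 1" using growth_lower[of d_seq, OF d_inc d1 k] .
  then show ?thesis unfolding dn_def by simp
qed

lemma word: "\<exists>l. l \<ge> k+1 \<and> (phi ^^ k) [0] = map chi [1..<l+1]"
proof (induction k)
  case 0
  have "chi 1 = 0" unfolding chi_def using d_in[of 1] d1 by simp
  then show ?case by (intro exI[of _ 1]) simp
next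
  case (Suc k)
  then obtain l where l: "l \<ge> k+1" "(phi ^^ k) [0] = map chi [1..<l+1]" by blast
  have "(phi ^^ Suc k) [0] = map chi [1..<dn (l+1)]" using l(2) phi_prefix by simp
  moreover have "dn (l+1) \<ge> 2* (l+1) - 1" using dn_lower[of "l+1"] by simp
  ultimately have "(phi ^^ Suc k) [0] = map chi [1..<(dn (l+1) - 1) + 1] \<and> dn (l+1) - 1 \<ge> Suc k + 1"
    using l(1) by auto
  then show ?case by blast
qed

lemma fixpt_chi: assumes i: "i \<ge> 1" shows "fixpt i = chi i"
proof -
  define P where "P x k = (i - 1 < length ((phi ^^ k) [0]) \<and> (phi ^^ k) [0] ! (i - 1) = x)" for x k
  have ev: "\<forall>\<^sub>F k in sequentially. P (chi i) k"
    unfolding eventually_sequentially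
  proof (intro exI allI impI)
    fix k assume "i \<le> k"
    obtain l where l: "l \<ge> k+1" "(phi ^^ k) [0] = map chi [1..<l+1]" using word by blast
    have il: "i - 1 < l" using l(1) \<open>i \<le> k\<close> by simp
    then have "(phi ^^ k) [0] ! (i - 1) = chi (1 + (i - 1))" unfolding l(2) by (intro nth_map_upt) simp
    then show "P (chi i) k" unfolding P_def l(2) using il i by simp
  qed
  show ?thesis unfolding fixpt_def P_def[symmetric]
  proof (rule the_equality)
    show "\<forall>\<^sub>F k in sequentially. P (chi i) k" by (rule ev)
    fix x assume "\<forall>\<^sub>F k in sequentially. P x k"
    then have "\<forall>\<^sub>F k in sequentially. P x k \<and> P (chi i) k" using ev by (rule eventually_conj)
    then obtain N where "\<forall>n\<ge>N. P x n \<and> P (chi i) n" unfolding eventually_sequentially by blast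
    then have "P x N \<and> P (chi i) N" by simp
    then show "x = chi i" unfolding P_def by simp
  qed
qed

lemma fixpt0_iff: "p \<ge> 1 \<Longrightarrow> fixpt p = 0 \<longleftrightarrow> int p \<in> Dset"
  using fixpt_chi unfolding chi_def by simp

lemma cnt: assumes k: "k \<ge> 1"
  shows "card {q \<in> {1..dn k}. fixpt q = 0} = k"
proof -
  have "{q \<in> {1..dn k}. fixpt q = 0} = dn ` {1..k}"
  proof (intro equalityI subsetI)
    fix q assume "q \<in> {q \<in> {1..dn k}. fixpt q = 0}"
    then have q: "q \<ge> 1" "q \<le> dn k" "int q \<in> Dset" using fixpt0_iff by auto
    then obtain j where j: "j \<ge> 1" "int q = d_seq j" unfolding Dset_def by auto
    have "d_seq j \<le> d_seq k" using q(2) j(2) dn_int[OF k] by linarith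
    then have "j \<le> k" using d_le_iff j k by simp
    moreover have "q = dn j" using j dn_int[OF j(1)] by simp
    ultimately show "q \<in> dn ` {1..k}" using j by auto
  next
    fix q assume "q \<in> dn ` {1..k}"
    then obtain j where j: "1 \<le> j" "j \<le> k" "q = dn j" by auto
    have "int q \<in> Dset" using j dn_int[OF j(1)] d_in[OF j(1)] by simp
    moreover have "1 \<le> q" using j dn_mono[of 1 j] dn1 by simp
    moreover have "q \<le> dn k" using j dn_mono by simp
    ultimately show "q \<in> {q \<in> {1..dn k}. fixpt q = 0}" using fixpt0_iff by auto
  qed
  moreover have "inj_on dn {1..k}"
  proof (rule inj_onI)
    fix x y assume "x \<in> {1..k}" "y \<in> {1..k}" "dn x = dn y"
    then have "d_seq x \<le> d_seq y" "d_seq y \<le> d_seq x" using dn_int by (metis atLeastAtMost_iff order_refl)+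
    then show "x = y" using d_le_iff \<open>x \<in> {1..k}\<close> \<open>y \<in> {1..k}\<close> by (meson antisym atLeastAtMost_iff)
  qed
  ultimately show ?thesis by (simp add: card_image)
qed

theorem part3: "\<forall>n\<ge>1. int (c_seq n) = d_seq n"
proof (intro allI impI)
  fix n :: nat assume n: "n \<ge> 1"
  have "c_seq n = dn n" unfolding c_seq_def
  proof (rule the_equality)
    show "dn n \<ge> 1 \<and> fixpt (dn n) = 0 \<and> card {q \<in> {1..dn n}. fixpt q = 0} = n"
    proof (intro conjI)
      show "dn n \<ge> 1" using dn_mono[of 1 n] dn1 n by simp
      then show "fixpt (dn n) = 0" using fixpt0_iff dn_int[OF n] d_in[OF n] by simp
      show "card {q \<in> {1..dn n}. fixpt q = 0} = n" by (rule cnt[OF n])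
    qed
  next
    fix p assume P: "p \<ge> 1 \<and> fixpt p = 0 \<and> card {q \<in> {1..p}. fixpt q = 0} = n"
    then have p1: "p \<ge> 1" and f0: "fixpt p = 0" by simp_all
    then have "int p \<in> Dset" using fixpt0_iff[OF p1] by simp
    then obtain j where j: "j \<ge> 1" "int p = d_seq j" unfolding Dset_def by auto
    then have pj: "p = dn j" using dn_int[OF j(1)] by simp
    then have "card {q \<in> {1..p}. fixpt q = 0} = j" using cnt[OF j(1)] by simp
    then have "j = n" using P by simp
    then show "p = dn n" using pj by simp
  qed
  then show "int (c_seq n) = d_seq n" using dn_int[OF n] by simp
qed


theorem theorem1:
  shows "(\<forall>a. isA a \<longleftrightarrow> (\<forall>n\<ge>1. a n = d_seq n)) \<and>
         (\<forall>b. isB b \<longleftrightarrow> (\<forall>n\<ge>1. b n = d_seq n)) \<and>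
         (\<forall>n\<ge>1. int (c_seq n) = d_seq n) \<and>
         (\<forall>n\<ge>1. r_seq n \<noteq> 2 * real n - 1) \<and>
         (\<forall>n\<ge>1. e_seq n = d_seq n)"
  using part1 part2 part3 part4 part5 by blast

end
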